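(* Let $T>0$, $K\ge2$, and let $h:\mathbb R^K\to\mathbb R^K$ be Lipschitz continuous. For $\mathbf y\in D^K[0,T]$ consider the integral equation $$\mathbf x(t)=\mathbf y(t)-\int_0^th(\mathbf x(s))\,ds-\Psi(\mathbf x,\mathbf y)(t)\,\mathbf I,\qquad t\in[0,T],$$ where $\Psi(\mathbf x,\mathbf y)(t)=\min_{1\le j\le K}\big\{y_j(t)-\int_0^th_j(\mathbf x(s))\,ds\big\}$ and $\mathbf I=(1,\dots,1)^\top$. Then for each $\mathbf y\in D^K[0,T]$ this equation has a unique solution $\mathbf x\in D^K[0,T]$, so that it defines a map $f:D^K[0,T]\to D^K[0,T]$, $f(\mathbf y)=\mathbf x$. Moreover $f$ is continuous when $D^K[0,T]$ is endowed with the topology of uniform convergence.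
   Context: $D^K[0,T]$ denotes the space of $\mathbb R^K$-valued functions on $[0,T]$ that are right-continuous with left limits; $h_j$ denotes the $j$th coordinate of $h$. *)

theory Defs
  imports "HOL-Analysis.Analysis"
begin

text \<open>Elements of D^K[0,T]: functions real => real^'k that are right-continuous
  on [0,T) and have left limits on (0,T]. Only the values on [0,T] matter.\<close>
definition cadlag :: "real \<Rightarrow> (real \<Rightarrow> real^'k) \<Rightarrow> bool" where
  "cadlag T x \<longleftrightarrow>
     (\<forall>t\<in>{0..<T}. continuous (at_right t) x) \<and>
     (\<forall>t\<in>{0<..T}. \<exists>l. (x \<longlongrightarrow> l) (at_left t))"

definition Psi :: "(real^'k \<Rightarrow> real^'k) \<Rightarrow> (real \<Rightarrow> real^'k) \<Rightarrow> (real \<Rightarrow> real^'k) \<Rightarrow> real \<Rightarrow> real" where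
  "Psi h x y t = Min (range (\<lambda>j. y t $ j - integral {0..t} (\<lambda>s. h (x s) $ j)))"

definition solves_eq :: "real \<Rightarrow> (real^'k \<Rightarrow> real^'k) \<Rightarrow> (real \<Rightarrow> real^'k) \<Rightarrow> (real \<Rightarrow> real^'k) \<Rightarrow> bool" where
  "solves_eq T h x y \<longleftrightarrow>
     (\<forall>t\<in>{0..T}. x t = y t - integral {0..t} (\<lambda>s. h (x s)) - Psi h x y t *\<^sub>R (\<chi> j. 1))"

end

theory Submission
  imports Defs
begin


definition cdl :: "real \<Rightarrow> real \<Rightarrow> (real \<Rightarrow> 'a::topological_space) \<Rightarrow> bool" where
  "cdl a b f \<longleftrightarrow> (\<forall>t\<in>{a..<b}. continuous (at_right t) f) \<and> (\<forall>t\<in>{a<..b}. \<exists>l. (f \<longlongrightarrow> l) (at_left t))"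

lemma cadlag_cdl: "cadlag T x = cdl 0 T x"
  unfolding cadlag_def cdl_def by simp

lemma cdl_local:
  fixes f :: "real \<Rightarrow> 'a::real_normed_vector"
  assumes "cdl a b f" "e > 0" "x \<in> {a..b}"
  shows "\<exists>d>0. \<exists>l. \<forall>s\<in>{a..b}. \<bar>s - x\<bar> < d \<longrightarrow> (s < x \<longrightarrow> norm (f s - l) \<le> e) \<and> (x \<le> s \<longrightarrow> norm (f s - f x) \<le> e)"
proof -
  have "\<exists>d1>0. \<forall>s\<in>{a..b}. \<bar>s - x\<bar> < d1 \<longrightarrow> x \<le> s \<longrightarrow> norm (f s - f x) \<le> e"
  proof (cases "x < b")
    case True
    then have "continuous (at_right x) f" using assms unfolding cdl_def by auto
    then have "(f \<longlongrightarrow> f x) (at_right x)" by (simp add: continuous_within)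
    then have "eventually (\<lambda>s. dist (f s) (f x) < e) (at_right x)" using assms(2) tendstoD by blast
    then obtain d where d: "d > 0" "\<And>s. s \<in> {x<..} \<Longrightarrow> s \<noteq> x \<Longrightarrow> dist s x < d \<Longrightarrow> dist (f s) (f x) < e"
      unfolding eventually_at by blast
    show ?thesis
    proof (intro exI[of _ d] conjI ballI impI)
      fix s assume "s \<in> {a..b}" "\<bar>s - x\<bar> < d" "x \<le> s"
      then show "norm (f s - f x) \<le> e"
        using d(2)[of s] assms(2) by (cases "s = x") (auto simp: dist_norm dist_real_def)
    qed (use d in auto)
  next
    case False
    then show ?thesis using assms(2,3) by (intro exI[of _ 1]) auto
  qed
  then obtain d1 where d1: "d1 > 0" "\<And>s. s\<in>{a..b} \<Longrightarrow> \<bar>s - x\<bar> < d1 \<Longrightarrow> x \<le> s \<Longrightarrow> norm (f s - f x) \<le> e" by blast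
  have "\<exists>d2>0. \<exists>l. \<forall>s\<in>{a..b}. \<bar>s - x\<bar> < d2 \<longrightarrow> s < x \<longrightarrow> norm (f s - l) \<le> e"
  proof (cases "a < x")
    case True
    then have "x \<in> {a<..b}" using assms(3) by auto
    then obtain l where "(f \<longlongrightarrow> l) (at_left x)" using assms(1) unfolding cdl_def by blast
    then have "eventually (\<lambda>s. dist (f s) l < e) (at_left x)" using assms(2) tendstoD by blast
    then obtain d where d: "d > 0" "\<And>s. s \<in> {..<x} \<Longrightarrow> s \<noteq> x \<Longrightarrow> dist s x < d \<Longrightarrow> dist (f s) l < e"
      unfolding eventually_at by blast
    show ?thesis
    proof (intro exI[of _ d] conjI exI[of _ l] ballI impI)
      fix s assume "s \<in> {a..b}" "\<bar>s - x\<bar> < d" "s < x"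
      then show "norm (f s - l) \<le> e"
        using d(2)[of s] by (auto simp: dist_norm dist_real_def)
    qed (use d in auto)
  next
    case False
    then show ?thesis using assms(2,3) by (intro exI[of _ 1]) auto
  qed
  then obtain d2 l where d2: "d2 > 0" "\<And>s. s\<in>{a..b} \<Longrightarrow> \<bar>s - x\<bar> < d2 \<Longrightarrow> s < x \<Longrightarrow> norm (f s - l) \<le> e" by blast
  show ?thesis
  proof (intro exI[of _ "min d1 d2"] conjI exI[of _ l] ballI impI)
    fix s assume "s \<in> {a..b}" "\<bar>s - x\<bar> < min d1 d2"
    then show "s < x \<Longrightarrow> norm (f s - l) \<le> e" "x \<le> s \<Longrightarrow> norm (f s - f x) \<le> e"
      using d1(2)[of s] d2(2)[of s] by auto
  qed (use d1 d2 in auto)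
qed

lemma cdl_gauge:
  fixes f :: "real \<Rightarrow> 'a::real_normed_vector"
  assumes "cdl a b f" "e > 0"
  obtains d L where "\<And>x. d x > 0"
    "\<And>x s. x \<in> {a..b} \<Longrightarrow> s\<in>{a..b} \<Longrightarrow> \<bar>s - x\<bar> < d x \<Longrightarrow> s < x \<Longrightarrow> norm (f s - L x) \<le> e"
    "\<And>x s. x \<in> {a..b} \<Longrightarrow> s\<in>{a..b} \<Longrightarrow> \<bar>s - x\<bar> < d x \<Longrightarrow> x \<le> s \<Longrightarrow> norm (f s - f x) \<le> e"
proof -
  have "\<forall>x. \<exists>d>0. \<exists>l. x \<in> {a..b} \<longrightarrow> (\<forall>s\<in>{a..b}. \<bar>s - x\<bar> < d \<longrightarrow> (s < x \<longrightarrow> norm (f s - l) \<le> e) \<and> (x \<le> s \<longrightarrow> norm (f s - f x) \<le> e))"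
  proof
    fix x show "\<exists>d>0. \<exists>l. x \<in> {a..b} \<longrightarrow> (\<forall>s\<in>{a..b}. \<bar>s - x\<bar> < d \<longrightarrow> (s < x \<longrightarrow> norm (f s - l) \<le> e) \<and> (x \<le> s \<longrightarrow> norm (f s - f x) \<le> e))"
      using cdl_local[OF assms, of x] zero_less_one by (cases "x \<in> {a..b}") blast+
  qed
  then obtain d L where "\<And>x. d x > 0" "\<And>x. x \<in> {a..b} \<longrightarrow> (\<forall>s\<in>{a..b}. \<bar>s - x\<bar> < d x \<longrightarrow> (s < x \<longrightarrow> norm (f s - L x) \<le> e) \<and> (x \<le> s \<longrightarrow> norm (f s - f x) \<le> e))"
    by metis
  then show ?thesis using that by blast
qed

lemma cdl_integrable:
  fixes f :: "real \<Rightarrow> 'a::banach"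
  assumes "cdl a b f"
  shows "f integrable_on {a..b}"
proof -
  have "f integrable_on cbox a b"
  proof (rule integrable_uniform_limit)
    fix e :: real assume e: "e > 0"
    obtain d L where d: "\<And>x. d x > 0"
      and dl: "\<And>x s. x \<in> {a..b} \<Longrightarrow> s\<in>{a..b} \<Longrightarrow> \<bar>s - x\<bar> < d x \<Longrightarrow> s < x \<Longrightarrow> norm (f s - L x) \<le> e"
      and dr: "\<And>x s. x \<in> {a..b} \<Longrightarrow> s\<in>{a..b} \<Longrightarrow> \<bar>s - x\<bar> < d x \<Longrightarrow> x \<le> s \<Longrightarrow> norm (f s - f x) \<le> e"
      using cdl_gauge[OF assms e] by blast
    obtain p where ptag: "p tagged_division_of cbox a b" and fine: "(\<lambda>x. ball x (d x)) fine p"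
      using fine_division_exists[OF gauge_ball_dependent, of d a b] d by blast
    have *: "\<forall>i\<in>snd ` p. \<exists>g. (\<forall>x\<in>i. norm (f x - g x) \<le> e) \<and> g integrable_on i"
    proof clarsimp
      fix x K assume xK: "(x, K) \<in> p"
      obtain u v where K: "K = cbox u v" using xK ptag by blast
      have xin: "x \<in> K" "K \<subseteq> cbox a b" using xK ptag by (auto dest: tagged_division_ofD)
      have Kb: "K \<subseteq> ball x (d x)" using fine xK by (auto dest: fineD)
      let ?g = "\<lambda>s. if s < x then L x else f x"
      show "\<exists>g. (\<forall>s\<in>K. norm (f s - g s) \<le> e) \<and> g integrable_on K"
      proof (intro exI conjI ballI)
        fix s assume s: "s \<in> K"
        then have "s \<in> {a..b}" "x \<in> {a..b}" "\<bar>s - x\<bar> < d x" using xin Kb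
          by (auto simp: dist_real_def abs_minus_commute)
        then show "norm (f s - ?g s) \<le> e" using dl dr by auto
      next
        have ux: "u \<le> x" "x \<le> v" using xin(1) K by auto
        have i1: "?g integrable_on {u..x}"
          by (rule integrable_spike_finite[where S="{x}" and f="\<lambda>s. L x"]) auto
        have i2: "?g integrable_on {x..v}"
          by (rule integrable_spike_finite[where S="{}" and f="\<lambda>s. f x"]) auto
        show "?g integrable_on K"
          using Henstock_Kurzweil_Integration.integrable_combine[OF ux i1 i2] K by simp
      qed
    qed
    from e have "e \<ge> 0" by auto
    from approximable_on_division[OF this division_of_tagged_division[OF ptag] *]
    show "\<exists>g. (\<forall>x\<in>cbox a b. norm (f x - g x) \<le> e) \<and> g integrable_on cbox a b"
      by metis
  qed
  then show ?thesis by simp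
qed

lemma cdl_bounded:
  fixes f :: "real \<Rightarrow> 'a::real_normed_vector"
  assumes "cdl a b f"
  shows "\<exists>M. \<forall>t\<in>{a..b}. norm (f t) \<le> M"
proof -
  obtain d L where d: "\<And>x. d x > 0"
    and dl: "\<And>x s. x \<in> {a..b} \<Longrightarrow> s\<in>{a..b} \<Longrightarrow> \<bar>s - x\<bar> < d x \<Longrightarrow> s < x \<Longrightarrow> norm (f s - L x) \<le> 1"
    and dr: "\<And>x s. x \<in> {a..b} \<Longrightarrow> s\<in>{a..b} \<Longrightarrow> \<bar>s - x\<bar> < d x \<Longrightarrow> x \<le> s \<Longrightarrow> norm (f s - f x) \<le> 1"
    using cdl_gauge[OF assms, of 1] by auto
  obtain p where ptag: "p tagged_division_of cbox a b" and fine: "(\<lambda>x. ball x (d x)) fine p"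
    using fine_division_exists[OF gauge_ball_dependent, of d a b] d by blast
  let ?M = "\<Sum>(x,K)\<in>p. norm (L x) + norm (f x) + 1"
  show ?thesis
  proof (intro exI ballI)
    fix t assume t: "t \<in> {a..b}"
    then have "t \<in> \<Union>{K. \<exists>x. (x, K) \<in> p}" using tagged_division_ofD(6)[OF ptag] by auto
    then obtain x K where xK: "(x, K) \<in> p" "t \<in> K" by blast
    have xin: "x \<in> K" "K \<subseteq> cbox a b" using xK ptag by (auto dest: tagged_division_ofD)
    have Kb: "K \<subseteq> ball x (d x)" using fine xK by (auto dest: fineD)
    have ab: "t \<in> {a..b}" "x \<in> {a..b}" "\<bar>t - x\<bar> < d x" using xin Kb xK(2)
      by (auto simp: dist_real_def abs_minus_commute)
    have "norm (f t) \<le> norm (L x) + norm (f x) + 1"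
    proof (cases "t < x")
      case True
      then have "norm (f t - L x) \<le> 1" using dl ab by auto
      then show ?thesis using norm_triangle_sub[of "f t" "L x"] by (smt (verit) norm_ge_zero norm_minus_commute norm_triangle_ineq2)
    next
      case False
      then have "norm (f t - f x) \<le> 1" using dr ab by auto
      then show ?thesis by (smt (verit) norm_ge_zero norm_triangle_ineq2)
    qed
    also have "\<dots> \<le> ?M"
      using member_le_sum[of "(x,K)" p "\<lambda>(x,K). norm (L x) + norm (f x) + 1"] xK(1) tagged_division_of_finite[OF ptag]
      by (auto simp: add_nonneg_nonneg)
    finally show "norm (f t) \<le> ?M" .
  qed
qed



lemma cdl_pair: "cdl a b f \<Longrightarrow> cdl a b g \<Longrightarrow> cdl a b (\<lambda>s. (f s, g s))"
  unfolding cdl_def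
proof (intro conjI ballI, goal_cases)
  case (1 t)
  then show ?case by (simp add: continuous_Pair)
next
  case (2 t)
  then obtain l1 l2 where "(f \<longlongrightarrow> l1) (at_left t)" "(g \<longlongrightarrow> l2) (at_left t)" by blast
  then show ?case by (blast intro: tendsto_Pair)
qed

lemma cdl_comp:
  fixes G :: "'a::t2_space \<Rightarrow> 'b::t2_space"
  assumes "cdl a b f" "continuous_on UNIV G"
  shows "cdl a b (\<lambda>s. G (f s))"
proof -
  have c: "isCont G z" for z using assms(2) by (simp add: continuous_on_eq_continuous_at)
  show ?thesis using assms(1) unfolding cdl_def
  proof (intro conjI ballI, goal_cases)
    case (1 t)
    then show ?case using c continuous_within_compose3 by blast
  next
    case (2 t)
    then obtain l where "(f \<longlongrightarrow> l) (at_left t)" by blast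
    then show ?case using c isCont_tendsto_compose by blast
  qed
qed

lemma cdl_cont:
  assumes "continuous_on UNIV u"
  shows "cdl a b u"
proof -
  have c: "isCont u z" for z using assms by (simp add: continuous_on_eq_continuous_at)
  show ?thesis unfolding cdl_def
  proof (intro conjI ballI)
    fix t show "continuous (at_right t) u" using c continuous_at_imp_continuous_at_within by blast
    show "\<exists>l. (u \<longlongrightarrow> l) (at_left t)"
      using c[of t] by (metis isCont_def tendsto_within_subset subset_UNIV)
  qed
qed

definition Mn :: "real^'k \<Rightarrow> real" where "Mn z = Min (range (\<lambda>j. z $ j))"
definition one :: "real^'k" where "one = (\<chi> j. 1)"
definition Phi :: "real^'k \<Rightarrow> real^'k" where "Phi z = z - Mn z *\<^sub>R one"

lemma Mn_le: "Mn z \<le> z $ j"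
  unfolding Mn_def by (rule Min_le) auto

lemma Mn_attained: "\<exists>j. Mn z = z $ j"
proof -
  have "Mn z \<in> range (\<lambda>j. z $ j)" unfolding Mn_def by (rule Min_in) auto
  then show ?thesis by auto
qed

lemma Mn_lip: "\<bar>Mn z - Mn w\<bar> \<le> norm (z - w)"
proof -
  have A: "Mn z \<le> Mn w + norm (z - w)" for z w :: "real^'k"
  proof -
    obtain j where j: "Mn w = w $ j" using Mn_attained by blast
    have "Mn z \<le> z $ j" by (rule Mn_le)
    also have "\<dots> \<le> w $ j + norm (z - w)" using component_le_norm_cart[of "z - w" j] by auto
    finally show ?thesis using j by simp
  qed
  show ?thesis using A[of z w] A[of w z] by (simp add: norm_minus_commute abs_le_iff)
qed

definition CC :: "('k::finite) itself \<Rightarrow> real" where "CC _ = 1 + norm (one :: real^'k)"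

lemma CC_pos: "CC TYPE('k::finite) \<ge> 1" unfolding CC_def by simp

lemma Phi_lip: "norm (Phi z - Phi w) \<le> CC TYPE('k::finite) * norm (z - w)" for z w :: "real^'k"
proof -
  have "Phi z - Phi w = (z - w) - (Mn z - Mn w) *\<^sub>R one" unfolding Phi_def by (simp add: algebra_simps)
  then have "norm (Phi z - Phi w) \<le> norm (z - w) + \<bar>Mn z - Mn w\<bar> * norm (one :: real^'k)"
    by (metis norm_scaleR norm_triangle_ineq4)
  also have "\<dots> \<le> norm (z - w) + norm (z - w) * norm (one :: real^'k)"
    using Mn_lip[of z w] by (simp add: mult_right_mono)
  finally show ?thesis unfolding CC_def by (simp add: algebra_simps)
qed

lemma Phi_cont: "continuous_on UNIV (Phi :: real^'k \<Rightarrow> real^'k)"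
proof -
  have "lipschitz_on (CC TYPE('k::finite)) UNIV (Phi :: real^'k \<Rightarrow> real^'k)"
    unfolding lipschitz_on_def using Phi_lip CC_pos[where 'k='k] by (auto simp: dist_norm)
  then show ?thesis by (rule lipschitz_on_continuous_on)
qed

lemma Psi_eq:
  assumes "(\<lambda>s. h (x s)) integrable_on {0..t}"
  shows "Psi h x y t = Mn (y t - integral {0..t} (\<lambda>s. h (x s)))"
  unfolding Psi_def Mn_def using assms by simp

lemma solves_iff:
  assumes "\<And>t. t \<in> {0..T} \<Longrightarrow> (\<lambda>s. h (x s)) integrable_on {0..t}"
  shows "solves_eq T h x y \<longleftrightarrow> (\<forall>t\<in>{0..T}. x t = Phi (y t - integral {0..t} (\<lambda>s. h (x s))))"
proof -
  have "x t = y t - integral {0..t} (\<lambda>s. h (x s)) - Psi h x y t *\<^sub>R (\<chi> j. 1) \<longleftrightarrow>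
        x t = Phi (y t - integral {0..t} (\<lambda>s. h (x s)))" if "t \<in> {0..T}" for t
    unfolding Phi_def one_def using Psi_eq[where h=h and x=x and t=t and y=y, OF assms[OF that]] by simp
  then show ?thesis unfolding solves_eq_def by auto
qed

lemma exp_integral:
  fixes B r :: real
  assumes "B > 0" "r \<ge> 0"
  shows "((\<lambda>s. exp (2*B * s)) has_integral ((exp (2*B*r) - 1) / (2*B))) {0..r}"
proof -
  have "((\<lambda>s. exp (2*B * s)) has_integral (exp (2*B*r) / (2*B) - exp (2*B*0) / (2*B))) {0..r}"
  proof (rule fundamental_theorem_of_calculus[OF assms(2)])
    fix s :: real
    have "((\<lambda>s. exp (2*B * s) / (2*B)) has_real_derivative exp (2*B * s)) (at s within {0..r})"
      using assms(1) by (auto intro!: derivative_eq_intros)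
    then show "((\<lambda>s. exp (2*B * s) / (2*B)) has_vector_derivative exp (2*B * s)) (at s within {0..r})"
      by (simp add: has_real_derivative_iff_has_vector_derivative)
  qed
  then show ?thesis by (simp add: diff_divide_distrib)
qed

lemma gronwall:
  fixes \<phi> :: "real \<Rightarrow> real"
  assumes B: "B > 0" and a: "a \<ge> 0" and T: "T \<ge> 0"
    and nn: "\<And>t. t \<in> {0..T} \<Longrightarrow> 0 \<le> \<phi> t"
    and int: "\<phi> integrable_on {0..T}"
    and bd: "\<And>t. t \<in> {0..T} \<Longrightarrow> \<phi> t \<le> M"
    and ineq: "\<And>t. t \<in> {0..T} \<Longrightarrow> \<phi> t \<le> a + B * integral {0..t} \<phi>"
  shows "\<And>t. t \<in> {0..T} \<Longrightarrow> \<phi> t \<le> 2 * a * exp (2*B*T)"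
proof -
  define \<psi> where "\<psi> t = \<phi> t * exp (-(2*B*t))" for t
  define S where "S = Sup (\<psi> ` {0..T})"
  have bdd: "bdd_above (\<psi> ` {0..T})"
  proof (rule bdd_aboveI2)
    fix t assume t: "t \<in> {0..T}"
    have "exp (-(2*B*t)) \<le> 1" using B t by auto
    then show "\<psi> t \<le> M" unfolding \<psi>_def using nn[OF t] bd[OF t]
      by (smt (verit) mult_left_le)
  qed
  have psiS: "\<psi> t \<le> S" if "t \<in> {0..T}" for t
    unfolding S_def using bdd that by (rule cSUP_upper2) auto
  have S0: "S \<ge> 0" using psiS[of 0] nn[of 0] T by (auto simp: \<psi>_def)
  have phiS: "\<phi> t \<le> S * exp (2*B*t)" if "t \<in> {0..T}" for t
  proof -
    have "\<phi> t = \<psi> t * exp (2*B*t)" unfolding \<psi>_def by (simp add: mult.assoc flip: exp_add)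
    also have "\<dots> \<le> S * exp (2*B*t)" using psiS[OF that] by simp
    finally show ?thesis .
  qed
  have key: "\<psi> t \<le> a + S / 2" if t: "t \<in> {0..T}" for t
  proof -
    have intt: "\<phi> integrable_on {0..t}"
      using integrable_on_subinterval[OF int, of 0 t] t by auto
    have ie: "((\<lambda>s. S * exp (2*B * s)) has_integral S * ((exp (2*B*t) - 1) / (2*B))) {0..t}"
      using has_integral_mult_right[OF exp_integral[OF B, of t]] t by auto
    have "integral {0..t} \<phi> \<le> S * ((exp (2*B*t) - 1) / (2*B))"
      using has_integral_le[OF integrable_integral[OF intt] ie] phiS t by auto
    then have "\<phi> t \<le> a + B * (S * ((exp (2*B*t) - 1) / (2*B)))"
      using ineq[OF t] B by (smt (verit) mult_left_mono)
    also have "\<dots> = a + S * (exp (2*B*t) - 1) / 2" using B by (simp add: field_simps)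
    finally have *: "\<phi> t \<le> a + S * (exp (2*B*t) - 1) / 2" .
    have "\<psi> t \<le> (a + S * (exp (2*B*t) - 1) / 2) * exp (-(2*B*t))"
      unfolding \<psi>_def using * by (simp add: mult_right_mono)
    also have "\<dots> = a * exp (-(2*B*t)) + S / 2 - S / 2 * exp (-(2*B*t))"
      by (simp add: field_simps exp_minus_inverse)
    also have "\<dots> \<le> a + S / 2"
    proof -
      have e1: "exp (-(2*B*t)) \<le> 1" "exp (-(2*B*t)) > 0" using B t by auto
      have "a * exp (-(2*B*t)) \<le> a" using a e1 by (simp add: mult_left_le)
      moreover have "S / 2 * exp (-(2*B*t)) \<ge> 0" using S0 e1 by simp
      ultimately show ?thesis by linarith
    qed
    finally show ?thesis .
  qed
  have "S \<le> a + S / 2"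
  proof -
    have "Sup (\<psi> ` {0..T}) \<le> a + S / 2"
      by (rule cSUP_least) (use key T in auto)
    then show ?thesis unfolding S_def .
  qed
  then have S2: "S \<le> 2 * a" unfolding S_def by linarith
  fix t assume t: "t \<in> {0..T}"
  have "\<phi> t \<le> S * exp (2*B*t)" by (rule phiS[OF t])
  also have "\<dots> \<le> 2 * a * exp (2*B*t)" using S2 by (simp add: mult_right_mono)
  also have "\<dots> \<le> 2 * a * exp (2*B*T)" using a B t by (auto intro!: mult_left_mono)
  finally show "\<phi> t \<le> 2 * a * exp (2*B*T)" .
qed



lemma cdl_sub: "cdl a b f \<Longrightarrow> t \<in> {a..b} \<Longrightarrow> (f :: real \<Rightarrow> 'a::banach) integrable_on {a..t}"
  using cdl_integrable integrable_on_subinterval by (metis atLeastAtMost_iff atLeastatMost_subset_iff order_refl)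

lemma stab:
  fixes h :: "real^'k \<Rightarrow> real^'k" and x x' y y' :: "real \<Rightarrow> real^'k"
  assumes lip: "lipschitz_on L UNIV h" and T: "T \<ge> 0"
    and cx: "cdl 0 T x" and cx': "cdl 0 T x'"
    and sx: "\<forall>t\<in>{0..T}. x t = Phi (y t - integral {0..t} (\<lambda>s. h (x s)))"
    and sx': "\<forall>t\<in>{0..T}. x' t = Phi (y' t - integral {0..t} (\<lambda>s. h (x' s)))"
    and dl: "\<forall>t\<in>{0..T}. norm (y' t - y t) \<le> \<delta>"
  shows "\<forall>t\<in>{0..T}. norm (x' t - x t) \<le> 2 * (CC TYPE('k) * \<delta>) * exp (2 * (CC TYPE('k) * L + 1) * T)"
proof -
  define C where "C = CC TYPE('k)"
  define B where "B = C * L + 1"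
  have L0: "L \<ge> 0" using lip lipschitz_on_nonneg by blast
  have C1: "C \<ge> 1" unfolding C_def by (rule CC_pos)
  have B0: "B > 0" unfolding B_def using L0 C1 by (smt (verit) mult_nonneg_nonneg)
  have d0: "\<delta> \<ge> 0" using dl T by (meson atLeastAtMost_iff norm_ge_zero order_trans order_refl)
  have hc: "continuous_on UNIV h" using lip by (rule lipschitz_on_continuous_on)
  have hx: "cdl 0 T (\<lambda>s. h (x s))" "cdl 0 T (\<lambda>s. h (x' s))"
    using cdl_comp[OF cx hc] cdl_comp[OF cx' hc] by auto
  define \<phi> where "\<phi> s = norm (x' s - x s)" for s
  have gc: "continuous_on UNIV (\<lambda>p::(real^'k)\<times>(real^'k). norm (fst p - snd p))"
    by (intro continuous_intros)
  have cphi: "cdl 0 T \<phi>" unfolding \<phi>_def using cdl_comp[OF cdl_pair[OF cx' cx] gc] by simp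
  have iphi: "\<phi> integrable_on {0..T}" using cdl_integrable[OF cphi] .
  obtain M where M: "\<And>t. t \<in> {0..T} \<Longrightarrow> norm (\<phi> t) \<le> M" using cdl_bounded[OF cphi] by blast
  have ineq: "\<phi> t \<le> C * \<delta> + B * integral {0..t} \<phi>" if t: "t \<in> {0..T}" for t
  proof -
    have i1: "(\<lambda>s. h (x s)) integrable_on {0..t}" "(\<lambda>s. h (x' s)) integrable_on {0..t}" "\<phi> integrable_on {0..t}"
      using cdl_sub[OF hx(1) t] cdl_sub[OF hx(2) t] cdl_sub[OF cphi t] by auto
    let ?I = "integral {0..t} (\<lambda>s. h (x s))" and ?I' = "integral {0..t} (\<lambda>s. h (x' s))"
    have "norm (?I' - ?I) = norm (integral {0..t} (\<lambda>s. h (x' s) - h (x s)))"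
      using integral_diff[OF i1(2) i1(1)] by simp
    also have "\<dots> \<le> integral {0..t} (\<lambda>s. L * \<phi> s)"
    proof (rule integral_norm_bound_integral)
      show "(\<lambda>s. h (x' s) - h (x s)) integrable_on {0..t}" using i1 by (intro integrable_diff)
      show "(\<lambda>s. L * \<phi> s) integrable_on {0..t}" using integrable_on_cmult_left[OF i1(3), of L] by simp
      fix s show "norm (h (x' s) - h (x s)) \<le> L * \<phi> s"
        using lipschitz_onD[OF lip, of "x' s" "x s"] unfolding \<phi>_def by (simp add: dist_norm)
    qed
    also have "\<dots> = L * integral {0..t} \<phi>" by simp
    finally have nI: "norm (?I' - ?I) \<le> L * integral {0..t} \<phi>" .
    have tri: "norm ((y' t - ?I') - (y t - ?I)) \<le> norm (y' t - y t) + norm (?I' - ?I)"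
    proof -
      have "(y' t - ?I') - (y t - ?I) = (y' t - y t) - (?I' - ?I)" by (simp add: algebra_simps)
      then show ?thesis using norm_triangle_ineq4 by metis
    qed
    have dyt: "norm (y' t - y t) \<le> \<delta>" using dl t by blast
    have int0: "integral {0..t} \<phi> \<ge> 0" using i1(3) by (rule integral_nonneg) (simp add: \<phi>_def)
    have "\<phi> t = norm (Phi (y' t - ?I') - Phi (y t - ?I))" unfolding \<phi>_def using sx sx' t by simp
    also have "\<dots> \<le> C * norm ((y' t - ?I') - (y t - ?I))" unfolding C_def by (rule Phi_lip)
    also have "\<dots> \<le> C * (\<delta> + L * integral {0..t} \<phi>)"
      using tri dyt nI C1 by (intro mult_left_mono) linarith+
    also have "\<dots> \<le> C * \<delta> + B * integral {0..t} \<phi>"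
    proof -
      have "C * L * integral {0..t} \<phi> \<le> (C * L + 1) * integral {0..t} \<phi>"
        using int0 by (intro mult_right_mono) auto
      then show ?thesis unfolding B_def by (simp add: distrib_left mult.assoc)
    qed
    finally show ?thesis .
  qed
  have "\<phi> t \<le> 2 * (C * \<delta>) * exp (2*B*T)" if "t \<in> {0..T}" for t
  proof -
    have a0: "0 \<le> C * \<delta>" using C1 d0 by simp
    have nn: "\<And>t. 0 \<le> \<phi> t" unfolding \<phi>_def by simp
    have bd: "\<phi> t \<le> M" if "t \<in> {0..T}" for t
    proof -
      have "norm (\<phi> t) \<le> M" using M[OF that] .
      then show ?thesis by simp
    qed
    show ?thesis
      using gronwall[where B=B and a="C * \<delta>" and T=T and \<phi>=\<phi> and M=M, OF B0 a0 T nn iphi bd ineq that] .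
  qed
  then show ?thesis unfolding \<phi>_def C_def B_def by auto
qed



lemma exist:
  fixes h :: "real^'k \<Rightarrow> real^'k" and y :: "real \<Rightarrow> real^'k"
  assumes lip: "lipschitz_on L UNIV h" and T: "T \<ge> 0" and cy: "cdl 0 T y"
  shows "\<exists>x. cdl 0 T x \<and> (\<forall>t\<in>{0..T}. x t = Phi (y t - integral {0..t} (\<lambda>s. h (x s))))"
proof -
  define C where "C = CC TYPE('k)"
  define B where "B = C * L + 1"
  have L0: "L \<ge> 0" using lip lipschitz_on_nonneg by blast
  have C1: "C \<ge> 1" unfolding C_def by (rule CC_pos)
  have B0: "B > 0" unfolding B_def using L0 C1 by (smt (verit) mult_nonneg_nonneg)
  have hc: "continuous_on UNIV h" using lip by (rule lipschitz_on_continuous_on)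
  define cl where "cl t = max 0 (min T t)" for t :: real
  have clin: "cl t \<in> {0..T}" for t unfolding cl_def using T by auto
  have clid: "t \<in> {0..T} \<Longrightarrow> cl t = t" for t unfolding cl_def by auto
  have clc: "continuous_on UNIV cl" unfolding cl_def by (intro continuous_intros)
  define U where "U v s = exp (2*B * s) *\<^sub>R apply_bcontfun v s" for v :: "real \<Rightarrow>\<^sub>C (real^'k)" and s
  define X where "X v s = Phi (y s - U v s)" for v s
  define F where "F v r = integral {0..r} (\<lambda>s. h (X v s))" for v r
  define G where "G v t = exp (-(2*B*cl t)) *\<^sub>R F v (cl t)" for v t
  have Uc: "continuous_on UNIV (U v)" for v unfolding U_def by (intro continuous_intros) auto
  have Gc: "continuous_on UNIV (\<lambda>p::(real^'k)\<times>(real^'k). Phi (fst p - snd p))"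
    by (rule continuous_on_compose2[OF Phi_cont]) (auto intro!: continuous_on_diff continuous_on_fst continuous_on_snd continuous_on_id)
  have Xc: "cdl 0 T (X v)" for v
    using cdl_comp[OF cdl_pair[OF cy cdl_cont[OF Uc]] Gc] unfolding X_def by simp
  have hXc: "cdl 0 T (\<lambda>s. h (X v s))" for v using cdl_comp[OF Xc hc] .
  have hXi: "(\<lambda>s. h (X v s)) integrable_on {0..r}" if "r \<in> {0..T}" for v r
    using cdl_sub[OF hXc that] .
  have Fc: "continuous_on {0..T} (F v)" for v
    unfolding F_def by (rule indefinite_integral_continuous_1[OF cdl_integrable[OF hXc]])
  define H where "H v r = exp (-(2*B*r)) *\<^sub>R F v r" for v r
  have Hc: "continuous_on {0..T} (H v)" for v unfolding H_def by (intro continuous_intros Fc)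
  have GH: "G v t = H v (cl t)" for v t unfolding G_def H_def ..
  have Gb: "G v \<in> bcontfun" for v
  proof -
    have c: "continuous_on UNIV (G v)" unfolding GH
      by (rule continuous_on_compose2[OF Hc[of v] clc]) (use clin in auto)
    have "range (G v) \<subseteq> H v ` {0..T}" unfolding GH using clin by auto
    moreover have "bounded (H v ` {0..T})"
      by (rule compact_imp_bounded, rule compact_continuous_image[OF Hc]) simp
    ultimately have "bounded (range (G v))" using bounded_subset by blast
    with c show ?thesis unfolding bcontfun_def by simp
  qed
  define \<Gamma> where "\<Gamma> v = Bcontfun (G v)" for v
  have \<Gamma>app: "apply_bcontfun (\<Gamma> v) = G v" for v unfolding \<Gamma>_def using Gb by (simp add: Bcontfun_inverse)
  have contr: "dist (\<Gamma> v) (\<Gamma> w) \<le> 1/2 * dist v w" for v w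
  proof (rule dist_bound)
    fix t
    define D where "D = dist v w"
    define r where "r = cl t"
    have r: "r \<in> {0..T}" unfolding r_def by (rule clin)
    have D0: "D \<ge> 0" unfolding D_def by simp
    have pt: "norm (h (X v s) - h (X w s)) \<le> L * C * D * exp (2*B * s)" for s
    proof -
      have a1: "norm (h (X v s) - h (X w s)) \<le> L * norm (X v s - X w s)"
        using lipschitz_onD[OF lip, of "X v s" "X w s"] by (simp add: dist_norm)
      have a2: "norm (X v s - X w s) \<le> C * norm ((y s - U v s) - (y s - U w s))"
        unfolding X_def C_def by (rule Phi_lip)
      have a3: "norm ((y s - U v s) - (y s - U w s)) = exp (2*B * s) * norm (apply_bcontfun v s - apply_bcontfun w s)"
      proof -
        have "(y s - U v s) - (y s - U w s) = - (exp (2*B * s) *\<^sub>R (apply_bcontfun v s - apply_bcontfun w s))"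
          unfolding U_def by (simp add: algebra_simps)
        then show ?thesis by simp
      qed
      have a4: "norm (apply_bcontfun v s - apply_bcontfun w s) \<le> D"
        unfolding D_def using dist_bounded[of v s w] by (simp add: dist_norm)
      have "norm (X v s - X w s) \<le> C * (exp (2*B * s) * D)"
        using a2 a3 a4 C1 by (smt (verit) exp_gt_zero mult_left_mono)
      then have "L * norm (X v s - X w s) \<le> L * (C * (exp (2*B * s) * D))"
        using L0 by (rule mult_left_mono)
      then show ?thesis using a1 by (simp add: algebra_simps)
    qed
    have "norm (F v r - F w r) = norm (integral {0..r} (\<lambda>s. h (X v s) - h (X w s)))"
      unfolding F_def using integral_diff[OF hXi[OF r] hXi[OF r]] by simp
    also have "\<dots> \<le> integral {0..r} (\<lambda>s. L * C * D * exp (2*B * s))"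
    proof (rule integral_norm_bound_integral)
      show "(\<lambda>s. h (X v s) - h (X w s)) integrable_on {0..r}" using hXi[OF r] by (intro integrable_diff)
      show "(\<lambda>s. L * C * D * exp (2*B * s)) integrable_on {0..r}"
        using has_integral_mult_right[OF exp_integral[OF B0, of r]] r by (auto simp: integrable_on_def)
    qed (rule pt)
    also have "\<dots> = L * C * D * ((exp (2*B*r) - 1) / (2*B))"
      using r by (intro integral_unique has_integral_mult_right exp_integral[OF B0]) auto
    also have "\<dots> \<le> L * C * D * (exp (2*B*r) / (2*B))"
      using L0 C1 D0 B0 by (intro mult_left_mono divide_right_mono) auto
    finally have nF: "norm (F v r - F w r) \<le> L * C * D * (exp (2*B*r) / (2*B))" .
    have "dist (apply_bcontfun (\<Gamma> v) t) (apply_bcontfun (\<Gamma> w) t) = exp (-(2*B*r)) * norm (F v r - F w r)"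
      unfolding \<Gamma>app G_def r_def[symmetric] dist_norm
      by (metis abs_of_pos exp_gt_zero norm_scaleR scaleR_right_diff_distrib)
    also have "\<dots> \<le> exp (-(2*B*r)) * (L * C * D * (exp (2*B*r) / (2*B)))"
      using nF by (intro mult_left_mono) auto
    also have "\<dots> = L * C * D / (2*B)"
      using B0 by (simp add: field_simps exp_minus_inverse)
    also have "\<dots> \<le> 1/2 * D"
    proof -
      have "L * C * D \<le> B * D" unfolding B_def using D0 by (simp add: mult_right_mono)
      then show ?thesis using B0 by (simp add: field_simps)
    qed
    finally show "dist (apply_bcontfun (\<Gamma> v) t) (apply_bcontfun (\<Gamma> w) t) \<le> 1/2 * dist v w"
      unfolding D_def .
  qed
  obtain v where fp: "\<Gamma> v = v"
    using banach_fix_type[of "1/2" \<Gamma>] contr by auto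
  define x where "x = X v"
  have "x t = Phi (y t - integral {0..t} (\<lambda>s. h (x s)))" if t: "t \<in> {0..T}" for t
  proof -
    have "apply_bcontfun v t = G v t" using fp \<Gamma>app by metis
    then have "apply_bcontfun v t = exp (-(2*B*t)) *\<^sub>R F v t" unfolding G_def clid[OF t] .
    then have "U v t = F v t" unfolding U_def by (simp add: exp_minus_inverse)
    then show ?thesis unfolding x_def X_def F_def by simp
  qed
  moreover have "cdl 0 T x" unfolding x_def by (rule Xc)
  ultimately show ?thesis by blast
qed



theorem theorem2:
  fixes T :: real and h :: "real^'k \<Rightarrow> real^'k"
  assumes "T > 0" and "CARD('k) \<ge> 2"
    and "\<exists>L. lipschitz_on L UNIV h"
  shows "(\<forall>y. cadlag T y \<longrightarrow>
            (\<exists>x. cadlag T x \<and> solves_eq T h x y \<and>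
               (\<forall>x'. cadlag T x' \<and> solves_eq T h x' y \<longrightarrow> (\<forall>t\<in>{0..T}. x' t = x t))))
       \<and> (\<forall>f. (\<forall>y. cadlag T y \<longrightarrow> cadlag T (f y) \<and> solves_eq T h (f y) y) \<longrightarrow>
            (\<forall>y. cadlag T y \<longrightarrow> (\<forall>\<epsilon>>0. \<exists>\<delta>>0. \<forall>y'. cadlag T y' \<and>
               (\<forall>t\<in>{0..T}. norm (y' t - y t) \<le> \<delta>) \<longrightarrow>
               (\<forall>t\<in>{0..T}. norm (f y' t - f y t) \<le> \<epsilon>))))"
proof -
  obtain L where lip: "lipschitz_on L UNIV h" using assms(3) by blast
  have T: "T \<ge> 0" using assms(1) by simp
  have hc: "continuous_on UNIV h" using lip by (rule lipschitz_on_continuous_on)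
  have sv: "solves_eq T h x y \<longleftrightarrow> (\<forall>t\<in>{0..T}. x t = Phi (y t - integral {0..t} (\<lambda>s. h (x s))))"
    if "cadlag T x" for x y
  proof (rule solves_iff)
    fix t assume "t \<in> {0..T}"
    then show "(\<lambda>s. h (x s)) integrable_on {0..t}"
      using cdl_sub[OF cdl_comp[OF that[unfolded cadlag_cdl] hc]] by blast
  qed
  define C where "C = CC TYPE('k)"
  define E where "E = exp (2 * (C * L + 1) * T)"
  have C1: "C \<ge> 1" unfolding C_def by (rule CC_pos)
  have E0: "E > 0" unfolding E_def by simp
  have st: "\<forall>t\<in>{0..T}. norm (x' t - x t) \<le> 2 * (C * \<delta>) * E"
    if "cadlag T x" "cadlag T x'" "solves_eq T h x y" "solves_eq T h x' y'"
       "\<forall>t\<in>{0..T}. norm (y' t - y t) \<le> \<delta>" for x x' y y' \<delta>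
    using stab[OF lip T that(1,2)[unfolded cadlag_cdl] that(3)[unfolded sv[OF that(1)]]
        that(4)[unfolded sv[OF that(2)]] that(5)]
    unfolding C_def E_def by simp
  have P1: "\<exists>x. cadlag T x \<and> solves_eq T h x y \<and>
               (\<forall>x'. cadlag T x' \<and> solves_eq T h x' y \<longrightarrow> (\<forall>t\<in>{0..T}. x' t = x t))"
    if cy: "cadlag T y" for y
  proof -
    obtain x where cx: "cdl 0 T x" and ex: "\<forall>t\<in>{0..T}. x t = Phi (y t - integral {0..t} (\<lambda>s. h (x s)))"
      using exist[OF lip T cy[unfolded cadlag_cdl]] by blast
    have cx': "cadlag T x" using cx by (simp add: cadlag_cdl)
    have sx: "solves_eq T h x y" using sv[OF cx'] ex by simp
    show ?thesis
    proof (intro exI conjI allI impI ballI)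
      fix x' t assume a: "cadlag T x' \<and> solves_eq T h x' y" and t: "t \<in> {0..T}"
      have "norm (x' t - x t) \<le> 2 * (C * 0) * E"
        using st[OF cx' _ sx, of x' y 0] a t by auto
      then show "x' t = x t" by simp
    qed (use cx' sx in auto)
  qed
  have P2: "\<forall>\<epsilon>>0. \<exists>\<delta>>0. \<forall>y'. cadlag T y' \<and>
               (\<forall>t\<in>{0..T}. norm (y' t - y t) \<le> \<delta>) \<longrightarrow>
               (\<forall>t\<in>{0..T}. norm (f y' t - f y t) \<le> \<epsilon>)"
    if f: "\<forall>y. cadlag T y \<longrightarrow> cadlag T (f y) \<and> solves_eq T h (f y) y" and cy: "cadlag T y" for f y
  proof (intro allI impI)
    fix \<epsilon> :: real assume e: "\<epsilon> > 0"
    define \<delta> where "\<delta> = \<epsilon> / (2 * C * E)"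
    have d0: "\<delta> > 0" unfolding \<delta>_def using e C1 E0 by simp
    have de: "2 * (C * \<delta>) * E = \<epsilon>" unfolding \<delta>_def using C1 E0 by (simp add: field_simps)
    show "\<exists>\<delta>>0. \<forall>y'. cadlag T y' \<and> (\<forall>t\<in>{0..T}. norm (y' t - y t) \<le> \<delta>) \<longrightarrow>
               (\<forall>t\<in>{0..T}. norm (f y' t - f y t) \<le> \<epsilon>)"
    proof (intro exI[of _ \<delta>] conjI allI impI d0)
      fix y' assume a: "cadlag T y' \<and> (\<forall>t\<in>{0..T}. norm (y' t - y t) \<le> \<delta>)"
      have "\<forall>t\<in>{0..T}. norm (f y' t - f y t) \<le> 2 * (C * \<delta>) * E"
        using st[of "f y" "f y'" y y' \<delta>] f cy a by blast
      then show "\<forall>t\<in>{0..T}. norm (f y' t - f y t) \<le> \<epsilon>" using de by simp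
    qed
  qed
  show ?thesis using P1 P2 by blast
qed

end
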